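(* Let $X_1=X_2=\mathbb R^d$, let $\mu_1=\mu_2$ be the uniform distribution on $[0,1]^d$, and let $c(x,y)=\sum_{i=1}^d|x_i-y_i|$. Then for $q>1$ and every $\varepsilon>0$, $$\mathrm{OT}_{q,\varepsilon}-\mathrm{OT}\ge\tilde K_{1,q}\,\varepsilon^{\frac{1}{(q-1)d+1}}-\tilde K_{2,q}\,\varepsilon,$$ where $$\tilde K_{1,q}=\frac{(q-1)d+1}{(q-1)d+q}\left[\frac{q-1}{((q-1)d+q)\,2^{\frac{(q-1)d+1}{q-1}}}\left(\frac{q}{q-1}\right)^{\frac{q}{q-1}}\right]^{\frac{q-1}{(q-1)d+1}},\qquad \tilde K_{2,q}=\left(1+2^{\frac{(q-1)d+1}{q-1}}\right)q^{-\frac{q}{q-1}}.$$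
   Context: $\Pi(\mu_1,\mu_2)$ is the set of couplings of $\mu_1,\mu_2$. The Tsallis relative entropy is $D_q(\mu,\nu)=\frac{1}{q-1}\int\big[(\frac{d\mu}{d\nu})^q-\frac{d\mu}{d\nu}\big]\,d\nu$ if $\mu\ll\nu$ and $q>1$, $+\infty$ otherwise. $\mathrm{OT}=\inf_{\pi\in\Pi(\mu_1,\mu_2)}\int c\,d\pi$ and $\mathrm{OT}_{q,\varepsilon}=\inf_{\pi\in\Pi(\mu_1,\mu_2)}\{\int c\,d\pi+\varepsilon D_q(\pi,\mu_1\otimes\mu_2)\}$. *)

theory Defs
  imports "HOL-Probability.Probability"
begin

definition couplings :: "'a::topological_space measure \<Rightarrow> 'b::topological_space measure \<Rightarrow> ('a \<times> 'b) measure set" where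
  "couplings \<mu>1 \<mu>2 = {\<pi>. prob_space \<pi> \<and> sets \<pi> = sets (borel \<Otimes>\<^sub>M borel)
      \<and> distr \<pi> borel fst = \<mu>1 \<and> distr \<pi> borel snd = \<mu>2}"

text \<open>Tsallis relative entropy D_q(mu, nu) = 1/(q-1) * integral of ((dmu/dnu)^q - dmu/dnu) dnu
  if mu << nu and q > 1, and +infinity otherwise.  The integrand is split into its two
  nonnegative parts (the second one integrates to a finite value).\<close>
definition tsallis :: "real \<Rightarrow> 'a measure \<Rightarrow> 'a measure \<Rightarrow> ereal" where
  "tsallis q \<mu> \<nu> =
     (if q > 1 \<and> sets \<mu> = sets \<nu> \<and> absolutely_continuous \<nu> \<mu> then
        ereal (1 / (q - 1)) *
          (enn2ereal (\<integral>\<^sup>+ x. ennreal (enn2real (RN_deriv \<nu> \<mu> x) powr q) \<partial>\<nu>)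
           - enn2ereal (\<integral>\<^sup>+ x. ennreal (enn2real (RN_deriv \<nu> \<mu> x)) \<partial>\<nu>))
      else \<infinity>)"

definition OT :: "('a::topological_space \<times> 'b::topological_space \<Rightarrow> real) \<Rightarrow> 'a measure \<Rightarrow> 'b measure \<Rightarrow> ereal" where
  "OT c \<mu>1 \<mu>2 = (INF \<pi>\<in>couplings \<mu>1 \<mu>2. enn2ereal (\<integral>\<^sup>+ z. ennreal (c z) \<partial>\<pi>))"

definition OT_reg :: "real \<Rightarrow> real \<Rightarrow> ('a::topological_space \<times> 'b::topological_space \<Rightarrow> real) \<Rightarrow> 'a measure \<Rightarrow> 'b measure \<Rightarrow> ereal" where
  "OT_reg q \<epsilon> c \<mu>1 \<mu>2 = (INF \<pi>\<in>couplings \<mu>1 \<mu>2.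
      enn2ereal (\<integral>\<^sup>+ z. ennreal (c z) \<partial>\<pi>) + ereal \<epsilon> * tsallis q \<pi> (\<mu>1 \<Otimes>\<^sub>M \<mu>2))"

definition l1_cost :: "(real^'n) \<times> (real^'n) \<Rightarrow> real" where
  "l1_cost z = (\<Sum>i\<in>UNIV. \<bar>fst z $ i - snd z $ i\<bar>)"

definition unif_cube :: "(real^'n) measure" where
  "unif_cube = uniform_measure lborel {x. \<forall>i. 0 \<le> x $ i \<and> x $ i \<le> 1}"

end

theory Submission
  imports Defs
begin

lemma cube_eq: "{x::real^'n. \<forall>i. 0 \<le> x $ i \<and> x $ i \<le> 1} = cbox 0 1"
  by (auto simp: mem_box_cart)

lemma lborel_cbox_cart:
  fixes a b :: "real^'n"
  assumes "\<And>i. a $ i \<le> b $ i"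
  shows "emeasure lborel (cbox a b) = ennreal (\<Prod>i\<in>UNIV. b $ i - a $ i)"
proof -
  have "a \<in> cbox a b" using assms by (auto simp: mem_box_cart)
  then have ne: "cbox a b \<noteq> {}" by blast
  have "emeasure lborel (cbox a b) = ennreal (measure lborel (cbox a b))"
    by (rule emeasure_eq_ennreal_measure) (use emeasure_lborel_cbox_finite[of a b] in auto)
  then show ?thesis using content_cbox_cart[OF ne] by (simp add: content_def)
qed

lemma cube_measure: "emeasure lborel {x::real^'n. \<forall>i. 0 \<le> x $ i \<and> x $ i \<le> 1} = 1"
  unfolding cube_eq by (subst lborel_cbox_cart) auto

lemma sets_unif: "sets (unif_cube :: (real^'n) measure) = sets borel"
  by (simp add: unif_cube_def)

lemma prob_unif: "prob_space (unif_cube :: (real^'n) measure)"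
  unfolding unif_cube_def
  by (rule prob_space_uniform_measure) (simp_all add: cube_measure)

lemma meas_id_unif: "(\<lambda>x. x) \<in> measurable (unif_cube :: (real^'n) measure) borel"
  using measurable_ident_sets[OF sets_unif] .

lemma diag_meas: "(\<lambda>x. (x,x)) \<in> measurable (unif_cube :: (real^'n) measure) (borel \<Otimes>\<^sub>M borel)"
  by (intro measurable_Pair meas_id_unif)

lemma diag_coupling:
  "distr (unif_cube :: (real^'n) measure) (borel \<Otimes>\<^sub>M borel) (\<lambda>x. (x,x)) \<in> couplings unif_cube unif_cube"
proof -
  let ?\<delta> = "distr (unif_cube :: (real^'n) measure) (borel \<Otimes>\<^sub>M borel) (\<lambda>x. (x,x))"
  have p: "prob_space ?\<delta>"
    by (rule prob_space.prob_space_distr[OF prob_unif diag_meas])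
  have "distr ?\<delta> borel fst = unif_cube"
    apply (subst distr_distr)
    using diag_meas apply (auto simp: comp_def)
    by (rule distr_id2) (simp add: sets_unif)
  moreover have "distr ?\<delta> borel snd = unif_cube"
    apply (subst distr_distr)
    using diag_meas apply (auto simp: comp_def)
    by (rule distr_id2) (simp add: sets_unif)
  ultimately show ?thesis using p unfolding couplings_def by simp
qed

lemma l1_cont: "continuous_on UNIV (l1_cost :: (real^'n) \<times> (real^'n) \<Rightarrow> real)"
  unfolding l1_cost_def[abs_def] by (intro continuous_intros)

lemma l1_meas: "(l1_cost :: (real^'n) \<times> (real^'n) \<Rightarrow> real) \<in> borel_measurable (borel \<Otimes>\<^sub>M borel)"
  unfolding borel_prod using l1_cont by (rule borel_measurable_continuous_onI)

lemma OT_zero: "OT l1_cost (unif_cube :: (real^'n) measure) unif_cube = 0"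
proof -
  let ?\<delta> = "distr (unif_cube :: (real^'n) measure) (borel \<Otimes>\<^sub>M borel) (\<lambda>x. (x,x))"
  have m: "(\<lambda>z. ennreal (l1_cost z)) \<in> borel_measurable (borel \<Otimes>\<^sub>M borel :: ((real^'n) \<times> (real^'n)) measure)"
    using l1_meas by measurable
  have "(\<integral>\<^sup>+ z. ennreal (l1_cost z) \<partial>?\<delta>) = (\<integral>\<^sup>+ x. ennreal (l1_cost (x,x)) \<partial>(unif_cube :: (real^'n) measure))"
  proof -
    have m2: "(\<lambda>z. ennreal (l1_cost z)) \<in> borel_measurable ?\<delta>"
      by (subst measurable_cong_sets[OF sets_distr refl]) (rule m)
    show ?thesis using nn_integral_distr[OF diag_meas m2] by simp
  qed
  also have "\<dots> = 0" by (simp add: l1_cost_def)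
  finally have z: "(\<integral>\<^sup>+ z. ennreal (l1_cost z) \<partial>?\<delta>) = 0" .
  have "OT l1_cost (unif_cube :: (real^'n) measure) unif_cube \<le> 0"
    unfolding OT_def using INF_lower[OF diag_coupling, of "\<lambda>\<pi>. enn2ereal (\<integral>\<^sup>+ z. ennreal ((l1_cost :: (real^'n) \<times> (real^'n) \<Rightarrow> real) z) \<partial>\<pi>)"] z
    by (simp add: zero_ennreal.rep_eq)
  moreover have "OT l1_cost (unif_cube :: (real^'n) measure) unif_cube \<ge> 0"
    unfolding OT_def by (rule INF_greatest) simp
  ultimately show ?thesis by simp
qed

lemma ball_bound:
  fixes x :: "real^'n" and t :: real
  assumes "t \<ge> 0"
  shows "emeasure (unif_cube :: (real^'n) measure) {y. l1_cost (x,y) \<le> t} \<le> ennreal ((2*t)^CARD('n))"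
proof -
  let ?S = "{x::real^'n. \<forall>i. 0 \<le> x $ i \<and> x $ i \<le> 1}"
  let ?B = "{y. l1_cost (x,y) \<le> t}"
  let ?l = "(\<chi> i. x $ i - t) :: real^'n" and ?u = "(\<chi> i. x $ i + t) :: real^'n"
  have Bm: "?B \<in> sets lborel"
  proof -
    have "(\<lambda>y. l1_cost (x,y)) \<in> borel_measurable borel"
      unfolding l1_cost_def by (intro borel_measurable_continuous_onI continuous_intros) 
    then show ?thesis by measurable
  qed
  have Sm: "?S \<in> sets lborel" unfolding cube_eq by simp
  have sub: "?B \<subseteq> cbox ?l ?u"
  proof
    fix y assume "y \<in> ?B"
    then have s: "(\<Sum>i\<in>UNIV. \<bar>x $ i - y $ i\<bar>) \<le> t" by (simp add: l1_cost_def)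
    have h: "\<bar>x $ i - y $ i\<bar> \<le> t" for i
      using member_le_sum[of i UNIV "\<lambda>i. \<bar>x $ i - y $ i\<bar>"] s by simp
    show "y \<in> cbox ?l ?u" unfolding mem_box_cart
    proof
      fix i show "?l $ i \<le> y $ i \<and> y $ i \<le> ?u $ i" using h[of i] by (simp add: abs_le_iff)
    qed
  qed
  have "emeasure (unif_cube :: (real^'n) measure) ?B = emeasure lborel (?S \<inter> ?B) / emeasure lborel ?S"
    unfolding unif_cube_def using Bm Sm by simp
  also have "\<dots> = emeasure lborel (?S \<inter> ?B)" by (simp add: cube_measure divide_ennreal_def)
  also have "\<dots> \<le> emeasure lborel (cbox ?l ?u)"
    using sub by (intro emeasure_mono) auto
  also have "\<dots> = ennreal (\<Prod>i\<in>UNIV. ?u $ i - ?l $ i)"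
    using assms by (intro lborel_cbox_cart) simp
  also have "\<dots> = ennreal ((2*t)^CARD('n))" by simp
  finally show ?thesis .
qed

lemma sets_nu: "sets ((unif_cube :: (real^'n) measure) \<Otimes>\<^sub>M unif_cube) = sets (borel \<Otimes>\<^sub>M borel)"
  by (rule sets_pair_measure_cong) (simp_all add: sets_unif)

lemma l1_meas_nu: "(l1_cost :: (real^'n) \<times> (real^'n) \<Rightarrow> real) \<in> borel_measurable ((unif_cube :: (real^'n) measure) \<Otimes>\<^sub>M unif_cube)"
  using l1_meas measurable_cong_sets[OF sets_nu refl] by blast

lemma nbhd_bound:
  fixes t :: real
  assumes "t \<ge> 0"
  shows "emeasure ((unif_cube :: (real^'n) measure) \<Otimes>\<^sub>M unif_cube) {z \<in> space ((unif_cube :: (real^'n) measure) \<Otimes>\<^sub>M unif_cube). l1_cost z \<le> t}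
     \<le> ennreal ((2*t)^CARD('n))"
proof -
  let ?\<mu> = "unif_cube :: (real^'n) measure"
  let ?A = "{z \<in> space (?\<mu> \<Otimes>\<^sub>M ?\<mu>). l1_cost z \<le> t}"
  interpret P: prob_space ?\<mu> by (rule prob_unif)
  have Am: "?A \<in> sets (?\<mu> \<Otimes>\<^sub>M ?\<mu>)"
    using l1_meas_nu by measurable
  have "emeasure (?\<mu> \<Otimes>\<^sub>M ?\<mu>) ?A = (\<integral>\<^sup>+x. emeasure ?\<mu> (Pair x -` ?A) \<partial>?\<mu>)"
    by (rule P.emeasure_pair_measure_alt[OF Am])
  also have "\<dots> \<le> (\<integral>\<^sup>+x. ennreal ((2*t)^CARD('n)) \<partial>?\<mu>)"
  proof (rule nn_integral_mono)
    fix x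
    have "Pair x -` ?A = {y. l1_cost (x,y) \<le> t}"
      by (auto simp: space_pair_measure unif_cube_def)
    then show "emeasure ?\<mu> (Pair x -` ?A) \<le> ennreal ((2*t)^CARD('n))"
      using ball_bound[OF assms, of x] by simp
  qed
  also have "\<dots> = ennreal ((2*t)^CARD('n))"
    by (simp add: P.emeasure_space_1)
  finally show ?thesis .
qed

definition Mq :: "real \<Rightarrow> real \<Rightarrow> real \<Rightarrow> real" where
  "Mq q a t = (t * (a*q) powr (-1/q)) powr (q/(q-1)) / (q/(q-1))"

lemma young_pt:
  fixes q a t g :: real
  assumes "q > 1" "a > 0" "t \<ge> 0" "g \<ge> 0"
  shows "t * g \<le> a * g powr q + Mq q a t"
proof -
  have aq: "a*q > 0" using assms by simp
  let ?A = "g * (a*q) powr (1/q)" and ?B = "t * (a*q) powr (-1/q)"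
  have e1: "?A * ?B = t * g"
  proof -
    have "(a*q) powr (1/q) * (a*q) powr (-1/q) = 1"
      using aq assms by (simp add: powr_add[symmetric])
    then show ?thesis by (metis (no_types, opaque_lifting) mult.commute mult.left_commute mult_1)
  qed
  have e2: "?A powr q / q = a * g powr q"
  proof -
    have "?A powr q = g powr q * ((a*q) powr (1/q)) powr q"
      using assms aq by (simp add: powr_mult)
    also have "((a*q) powr (1/q)) powr q = a*q"
      using aq assms by (simp add: powr_powr)
    finally show ?thesis using assms by simp
  qed
  have e3: "?A * ?B \<le> ?A powr q / q + ?B powr (q/(q-1)) / (q/(q-1))"
    using assms by (intro Youngs_inequality) (auto simp: field_simps)
  show ?thesis unfolding Mq_def using e1 e2 e3 by linarith
qed

lemma core:
  fixes \<pi> :: "((real^'n) \<times> (real^'n)) measure" and q a t :: real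
  assumes cp: "\<pi> \<in> couplings unif_cube unif_cube" and q: "q > 1" and a: "a > 0" and t: "t > 0"
    and ss: "sets \<pi> = sets ((unif_cube :: (real^'n) measure) \<Otimes>\<^sub>M unif_cube)"
    and ac: "absolutely_continuous ((unif_cube :: (real^'n) measure) \<Otimes>\<^sub>M unif_cube) \<pi>"
  defines "g \<equiv> \<lambda>z. enn2real (RN_deriv ((unif_cube :: (real^'n) measure) \<Otimes>\<^sub>M unif_cube) \<pi> z)"
  shows "ennreal t \<le> (\<integral>\<^sup>+z. ennreal (l1_cost z) \<partial>\<pi>)
            + ennreal a * (\<integral>\<^sup>+z. ennreal (g z powr q) \<partial>((unif_cube :: (real^'n) measure) \<Otimes>\<^sub>M unif_cube))
            + ennreal (Mq q a t * (2*t)^CARD('n))"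
    and "(\<integral>\<^sup>+ z. ennreal (g z) \<partial>((unif_cube :: (real^'n) measure) \<Otimes>\<^sub>M unif_cube)) = 1"
proof -
  let ?\<mu> = "unif_cube :: (real^'n) measure"
  let ?\<nu> = "?\<mu> \<Otimes>\<^sub>M ?\<mu>"
  let ?f = "RN_deriv ?\<nu> \<pi>"
  interpret \<nu>: prob_space ?\<nu> by (intro prob_space_pair prob_unif)
  have pp: "prob_space \<pi>" using cp by (simp add: couplings_def)
  interpret \<pi>: prob_space \<pi> by (rule pp)
  have dens: "density ?\<nu> ?f = \<pi>"
    by (rule \<nu>.density_RN_deriv[OF ac ss])
  have fin: "AE z in ?\<nu>. ?f z \<noteq> \<infinity>"
    by (rule \<nu>.RN_deriv_finite[OF prob_space_imp_sigma_finite[OF pp] ac ss])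
  have fg: "AE z in ?\<nu>. ?f z = ennreal (g z)"
    using fin by eventually_elim (simp add: g_def less_top)
  have gm[measurable]: "g \<in> borel_measurable ?\<nu>" unfolding g_def by measurable
  have lm[measurable]: "l1_cost \<in> borel_measurable ?\<nu>" by (rule l1_meas_nu)
  have g0: "g z \<ge> 0" for z unfolding g_def by simp
  have l0: "l1_cost z \<ge> 0" for z :: "(real^'n) \<times> (real^'n)" unfolding l1_cost_def by (simp add: sum_nonneg)
  have Ic: "(\<integral>\<^sup>+z. ennreal (l1_cost z) \<partial>\<pi>) = (\<integral>\<^sup>+z. ennreal (l1_cost z * g z) \<partial>?\<nu>)"
  proof -
    have "(\<integral>\<^sup>+z. ennreal (l1_cost z) \<partial>\<pi>) = (\<integral>\<^sup>+z. ennreal (l1_cost z) \<partial>density ?\<nu> ?f)"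
      by (simp add: dens)
    also have "\<dots> = (\<integral>\<^sup>+z. ?f z * ennreal (l1_cost z) \<partial>?\<nu>)"
      by (rule nn_integral_density) measurable
    also have "\<dots> = (\<integral>\<^sup>+z. ennreal (l1_cost z * g z) \<partial>?\<nu>)"
      apply (rule nn_integral_cong_AE)
      using fg by eventually_elim (simp add: ennreal_mult g0 l0 mult.commute)
    finally show ?thesis .
  qed
  have I1: "(\<integral>\<^sup>+ z. ennreal (g z) \<partial>?\<nu>) = 1"
  proof -
    have "(\<integral>\<^sup>+ z. ennreal (g z) \<partial>?\<nu>) = (\<integral>\<^sup>+ z. ?f z * indicator (space ?\<nu>) z \<partial>?\<nu>)"
      apply (rule nn_integral_cong_AE)
      using fg by eventually_elim (simp add: space_pair_measure unif_cube_def)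
    also have "\<dots> = emeasure (density ?\<nu> ?f) (space ?\<nu>)"
      by (rule emeasure_density[symmetric]) auto
    also have "\<dots> = emeasure \<pi> (space \<pi>)"
      using dens sets_eq_imp_space_eq[OF ss] by simp
    also have "\<dots> = 1" by (rule \<pi>.emeasure_space_1)
    finally show ?thesis .
  qed
  then show "(\<integral>\<^sup>+ z. ennreal (g z) \<partial>?\<nu>) = 1" .
  let ?A = "{z \<in> space ?\<nu>. l1_cost z \<le> t}"
  have Am[measurable]: "?A \<in> sets ?\<nu>" by measurable
  let ?M = "Mq q a t"
  have M0: "?M \<ge> 0" unfolding Mq_def using q by simp
  have pw: "ennreal t * ennreal (g z) \<le> ennreal (l1_cost z * g z) + ennreal a * ennreal (g z powr q) + ennreal ?M * indicator ?A z"
    if "z \<in> space ?\<nu>" for z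
  proof (cases "z \<in> ?A")
    case True
    then have "t * g z \<le> l1_cost z * g z + a * g z powr q + ?M"
      using young_pt[OF q a _ g0, of t z] t l0[of z] g0[of z] by (smt (verit) mult_nonneg_nonneg)
    then have "ennreal (t * g z) \<le> ennreal (l1_cost z * g z + a * g z powr q + ?M)"
      by (rule ennreal_leI)
    then show ?thesis using True a M0 g0[of z] l0[of z] t
      by (simp add: ennreal_mult[symmetric] ennreal_plus[symmetric] del: ennreal_plus)
  next
    case False
    then have "l1_cost z > t" using that by simp
    then have "t * g z \<le> l1_cost z * g z + a * g z powr q"
      using g0[of z] a by (smt (verit) mult_right_mono powr_ge_zero mult_nonneg_nonneg)
    then have "ennreal (t * g z) \<le> ennreal (l1_cost z * g z + a * g z powr q)"
      by (rule ennreal_leI)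
    then show ?thesis using False a g0[of z] l0[of z] t
      by (simp add: ennreal_mult[symmetric] ennreal_plus[symmetric] del: ennreal_plus)
  qed
  have "ennreal t = ennreal t * (\<integral>\<^sup>+ z. ennreal (g z) \<partial>?\<nu>)" using I1 by simp
  also have "\<dots> = (\<integral>\<^sup>+ z. ennreal t * ennreal (g z) \<partial>?\<nu>)"
    by (rule nn_integral_cmult[symmetric]) measurable
  also have "\<dots> \<le> (\<integral>\<^sup>+ z. ennreal (l1_cost z * g z) + ennreal a * ennreal (g z powr q) + ennreal ?M * indicator ?A z \<partial>?\<nu>)"
    by (rule nn_integral_mono) (rule pw)
  also have "\<dots> = (\<integral>\<^sup>+ z. ennreal (l1_cost z * g z) \<partial>?\<nu>) + (\<integral>\<^sup>+ z. ennreal a * ennreal (g z powr q) \<partial>?\<nu>) + (\<integral>\<^sup>+ z. ennreal ?M * indicator ?A z \<partial>?\<nu>)"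
    by (simp add: nn_integral_add)
  also have "\<dots> = (\<integral>\<^sup>+z. ennreal (l1_cost z) \<partial>\<pi>) + ennreal a * (\<integral>\<^sup>+ z. ennreal (g z powr q) \<partial>?\<nu>) + ennreal ?M * emeasure ?\<nu> ?A"
    by (simp add: Ic nn_integral_cmult nn_integral_cmult_indicator)
  also have "\<dots> \<le> (\<integral>\<^sup>+z. ennreal (l1_cost z) \<partial>\<pi>) + ennreal a * (\<integral>\<^sup>+ z. ennreal (g z powr q) \<partial>?\<nu>) + ennreal ?M * ennreal ((2*t)^CARD('n))"
    using nbhd_bound[of t] t by (intro add_left_mono mult_left_mono) auto
  also have "\<dots> = (\<integral>\<^sup>+z. ennreal (l1_cost z) \<partial>\<pi>) + ennreal a * (\<integral>\<^sup>+ z. ennreal (g z powr q) \<partial>?\<nu>) + ennreal (?M * (2*t)^CARD('n))"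
    using M0 t by (simp add: ennreal_mult)
  finally show "ennreal t \<le> (\<integral>\<^sup>+z. ennreal (l1_cost z) \<partial>\<pi>) + ennreal a * (\<integral>\<^sup>+ z. ennreal (g z powr q) \<partial>?\<nu>) + ennreal (?M * (2*t)^CARD('n))" .
qed

lemma ereal_step:
  fixes Ic Iq :: ennreal and t K a q \<epsilon> :: real
  assumes h: "ennreal t \<le> Ic + ennreal a * Iq + ennreal K"
    and a: "a = \<epsilon>/(q-1)" and q: "q > 1" and e: "\<epsilon> > 0" and t: "t \<ge> 0" and K: "K \<ge> 0"
  shows "ereal (t - K - a) \<le> enn2ereal Ic + ereal \<epsilon> * (ereal (1/(q-1)) * (enn2ereal Iq - enn2ereal 1))"
proof (cases Ic rule: ennreal_cases)
  case (real ic)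
  then show ?thesis
  proof (cases Iq rule: ennreal_cases)
    case (real iq)
    have a0: "a \<ge> 0" using a q e by simp
    have "ennreal t \<le> ennreal (ic + a * iq + K)"
      using h real \<open>Ic = ennreal ic\<close> \<open>0 \<le> ic\<close> a0 K by (simp add: ennreal_mult)
    moreover have "0 \<le> ic + a * iq + K" using real \<open>0 \<le> ic\<close> a0 K by simp
    ultimately have "t \<le> ic + a * iq + K"
      using ennreal_le_iff by blast
    moreover have "enn2ereal Ic + ereal \<epsilon> * (ereal (1/(q-1)) * (enn2ereal Iq - enn2ereal 1)) = ereal (ic + \<epsilon> * (1/(q-1) * (iq - 1)))"
    proof -
      have i1: "enn2ereal Iq - enn2ereal 1 = ereal (iq - 1)"
        using real by (simp add: one_ennreal.rep_eq one_ereal_def)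
      have i2: "enn2ereal Ic = ereal ic" using \<open>Ic = ennreal ic\<close> \<open>0 \<le> ic\<close> by simp
      show ?thesis unfolding i1 i2 by (simp only: times_ereal.simps plus_ereal.simps)
    qed
    moreover have "\<epsilon> * (1/(q-1) * (iq - 1)) = a * iq - a"
    proof -
      have "\<epsilon> * (1/(q-1) * (iq - 1)) = (\<epsilon>/(q-1)) * iq - \<epsilon>/(q-1)" by (simp add: diff_divide_distrib right_diff_distrib)
      then show ?thesis unfolding a .
    qed
    ultimately show ?thesis by simp
  next
    case top
    have i1: "enn2ereal Iq - enn2ereal 1 = \<infinity>" using top by (simp add: one_ennreal.rep_eq)
    have i2: "ereal (1/(q-1)) * \<infinity> = \<infinity>" using q by simp
    have i3: "ereal \<epsilon> * \<infinity> = \<infinity>" using e by simp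
    have i4: "enn2ereal Ic + \<infinity> = \<infinity>" by simp
    show ?thesis unfolding i1 i2 i3 i4 by simp
  qed
next
  case top
  have "enn2ereal Iq \<ge> 0" by simp
  then have "enn2ereal Iq - enn2ereal 1 \<noteq> -\<infinity>" by (cases "enn2ereal Iq") (auto simp: one_ennreal.rep_eq one_ereal_def)
  then have "ereal \<epsilon> * (ereal (1/(q-1)) * (enn2ereal Iq - enn2ereal 1)) \<noteq> -\<infinity>"
    using q e by (cases "enn2ereal Iq - enn2ereal 1") auto
  then show ?thesis using top by simp
qed

lemma ln2_ge: "ln 2 \<ge> (1/2::real)"
proof -
  have "exp (1/2::real) * exp (1/2) = exp 1" by (simp add: exp_add[symmetric])
  also have "\<dots> \<le> 3" by (rule exp_le)
  finally have h2: "exp (1/2::real) ^ 2 \<le> 2 ^ 2" by (simp add: power2_eq_square)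
  have "exp (1/2::real) \<le> 2" using power2_le_imp_le[OF h2] by simp
  then show ?thesis by (subst ln_ge_iff) simp_all
qed

lemma two_powr_lin:
  fixes x :: real
  assumes "x \<ge> 0"
  shows "2 + x \<le> 2 * 2 powr x"
proof -
  have "2 powr x = exp (x * ln 2)" by (simp add: powr_def)
  also have "\<dots> \<ge> 1 + x * ln 2" by (rule exp_ge_add_one_self)
  finally have h: "2 powr x \<ge> 1 + x * ln 2" .
  have "x * ln 2 \<ge> x * (1/2)" using mult_left_mono[OF ln2_ge assms] .
  then show ?thesis using h by linarith
qed

lemma bern_le:
  fixes s x :: real
  assumes "0 \<le> s" "s \<le> 1" "x > 0"
  shows "x powr s \<le> s * x + (1 - s)"
  using Youngs_inequality_0[of s "1-s" x 1] assms by simp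

lemma ar1: fixes s u y :: real
  shows "0 < s \<Longrightarrow> s \<le> 1 \<Longrightarrow> u \<le> 2 \<Longrightarrow> 2 + s \<le> 2*y \<Longrightarrow> (s+1)*u \<le> 1 + 2*y"
proof -
  assume a: "0 < s" "s \<le> 1" "u \<le> 2" "2 + s \<le> 2*y"
  have "(s+1)*u \<le> (s+1)*2" using a by (intro mult_left_mono) auto
  moreover have "(s+1)*2 = 2 + 2 * s" by (simp add: algebra_simps)
  ultimately show ?thesis using a by linarith
qed

lemma ar2: fixes s u y :: real
  shows "1 \<le> s \<Longrightarrow> s \<le> 2 \<Longrightarrow> u \<le> 9/4 \<Longrightarrow> 2 + (s-1) \<le> 2*y \<Longrightarrow> (s+1)*u \<le> 1 + 4*y"
proof -
  assume a: "1 \<le> s" "s \<le> 2" "u \<le> 9/4" "2 + (s-1) \<le> 2*y"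
  have "(s+1)*u \<le> (s+1)*(9/4)" using a by (intro mult_left_mono) auto
  moreover have "(s+1)*(9/4) = 9/4 + (9/4) * s" by (simp add: algebra_simps)
  ultimately show ?thesis using a by linarith
qed

lemma ar3: fixes s u y :: real
  shows "2 \<le> s \<Longrightarrow> u \<le> 3 \<Longrightarrow> 2 + (s-2) \<le> 2*y \<Longrightarrow> (s+1)*u \<le> 1 + 8*y"
proof -
  assume a: "2 \<le> s" "u \<le> 3" "2 + (s-2) \<le> 2*y"
  have "(s+1)*u \<le> (s+1)*3" using a by (intro mult_left_mono) auto
  moreover have "(s+1)*3 = 3 + 3 * s" by (simp add: algebra_simps)
  ultimately show ?thesis using a by linarith
qed


lemma key_num:
  fixes s :: real
  assumes s: "s > 0"
  shows "(s+1) * (1 + 1/s) powr s \<le> 1 + 2 powr (1+s)"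
proof -
  have x0: "1 + 1/s > 0" using s by (simp add: add_pos_pos)
  consider "s \<le> 1" | "1 \<le> s" "s \<le> 2" | "s \<ge> 2" by linarith
  then show ?thesis
  proof cases
    case 1
    have "(1 + 1/s) powr s \<le> s * (1 + 1/s) + (1 - s)" using bern_le[OF _ 1 x0] s by simp
    also have "\<dots> = 2" using s by (simp add: field_simps)
    finally have u: "(1 + 1/s) powr s \<le> 2" .
    have e: "2 powr (1+s) = 2 * 2 powr s"
    proof -
      have "(2::real) powr (1+s) = 2 powr 1 * 2 powr s" by (rule powr_add)
      then show ?thesis by simp
    qed
    show ?thesis unfolding e
      by (rule ar1[OF s 1 u two_powr_lin]) (use s in simp)
  next
    case 2
    have "(1 + 1/s) powr s = (1 + 1/s) powr (1 + (s - 1))" by simp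
    also have "\<dots> = (1 + 1/s) powr 1 * (1 + 1/s) powr (s - 1)" by (rule powr_add)
    also have "\<dots> = (1 + 1/s) * (1 + 1/s) powr (s - 1)" using x0 by simp
    also have "\<dots> \<le> (1 + 1/s) * ((s-1) * (1 + 1/s) + (1 - (s-1)))"
      using bern_le[of "s-1" "1+1/s"] 2 x0 by (intro mult_left_mono) auto
    also have "\<dots> = (1 + 1/s) * (2 - 1/s)" using s by (simp add: field_simps)
    also have "\<dots> \<le> 9/4"
    proof -
      have gen: "(1 + x) * (2 - x) = 9/4 - (x - 1/2)^2" for x :: real by (simp add: algebra_simps power2_eq_square)
      have "(1 + 1/s) * (2 - 1/s) = 9/4 - (1/s - 1/2)^2" by (rule gen)
      then show ?thesis by simp
    qed
    finally have u: "(1 + 1/s) powr s \<le> 9/4" .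
    have e: "2 powr (1+s) = 4 * 2 powr (s-1)"
    proof -
      have "(2::real) powr (1+s) = 2 powr (2 + (s - 1))" by simp
      also have "\<dots> = 2 powr 2 * 2 powr (s-1)" by (rule powr_add)
      finally show ?thesis by simp
    qed
    show ?thesis unfolding e
      by (rule ar2[OF 2 u two_powr_lin]) (use 2 in simp)
  next
    case 3
    have "(1 + 1/s) powr s = exp (s * ln (1 + 1/s))" using x0 by (simp add: powr_def)
    also have "\<dots> \<le> exp (s * (1/s))"
      using ln_add_one_self_le_self[of "1/s"] s by (intro exp_mono mult_left_mono) auto
    also have "\<dots> \<le> 3" using s exp_le by simp
    finally have u: "(1 + 1/s) powr s \<le> 3" .
    have e: "2 powr (1+s) = 8 * 2 powr (s-2)"
    proof -
      have "(2::real) powr (1+s) = 2 powr (3 + (s - 2))" by simp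
      also have "\<dots> = 2 powr 3 * 2 powr (s-2)" by (rule powr_add)
      finally show ?thesis by simp
    qed
    show ?thesis unfolding e
      by (rule ar3[OF 3 u two_powr_lin]) (use 3 in simp)
  qed
qed

lemma final_num:
  fixes q \<epsilon> :: real and n :: nat
  assumes q: "q > 1" and e: "\<epsilon> > 0" and n: "n \<ge> 1"
  shows "\<exists>t>0. ((q - 1) * real n + 1) / ((q - 1) * real n + q) *
      ((q - 1) / (((q - 1) * real n + q) * 2 powr (((q - 1) * real n + 1) / (q - 1)))
        * (q / (q - 1)) powr (q / (q - 1))) powr ((q - 1) / ((q - 1) * real n + 1))
      * \<epsilon> powr (1 / ((q - 1) * real n + 1))
      - (1 + 2 powr (((q - 1) * real n + 1) / (q - 1))) * q powr (- (q / (q - 1))) * \<epsilon>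
     \<le> t - Mq q (\<epsilon>/(q-1)) t * (2*t)^n - \<epsilon>/(q-1)"
proof -
  define d where "d = real n"
  define s where "s = 1/(q-1)"
  have d1: "d \<ge> 1" using n by (simp add: d_def)
  have s0: "s > 0" using q by (simp add: s_def)
  have qs: "q - 1 = 1/s" using q by (simp add: s_def)
  have qq: "q = (s+1)/s" using qs s0 by (simp add: field_simps)
  define D where "D = d + s"
  have D0: "D > 0" using d1 s0 by (simp add: D_def)
  have b1: "(q - 1) * d + 1 = D/s" unfolding qs D_def using s0 by (simp add: field_simps)
  have b2: "(q - 1) * d + q = (D+1)/s" unfolding D_def using qs s0 by (simp add: field_simps)
  have r1: "((q - 1) * d + 1) / ((q - 1) * d + q) = D/(D+1)"
    unfolding b1 b2 using s0 D0 by (simp add: field_simps)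
  have r2: "((q - 1) * d + 1) / (q - 1) = D"
    unfolding qs using s0 by (simp add: D_def field_simps)
  have r3: "(q - 1) / (((q - 1) * d + q) * 2 powr D) = 1 / ((D+1) * 2 powr D)"
    unfolding b2 unfolding qs using s0 D0 by (simp add: field_simps)
  have r4: "q / (q - 1) = s + 1"
    unfolding qs using qq s0 by (simp add: field_simps)
  have r5: "(q - 1) / ((q - 1) * d + 1) = 1/D"
    unfolding b1 unfolding qs using s0 D0 by (simp add: field_simps)
  have r6: "1 / ((q - 1) * d + 1) = s/D"
    unfolding b1 using s0 D0 by (simp add: field_simps)
  define X where "X = 1 / ((D+1) * 2 powr D) * (s+1) powr (s+1)"
  have X0: "X > 0" using D0 s0 by (simp add: X_def)
  define t where "t = X powr (1/D) * \<epsilon> powr (s/D)"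
  have t0: "t > 0" using X0 e by (simp add: t_def)
  have K1e: "((q - 1) * real n + 1) / ((q - 1) * real n + q) *
      ((q - 1) / (((q - 1) * real n + q) * 2 powr (((q - 1) * real n + 1) / (q - 1)))
        * (q / (q - 1)) powr (q / (q - 1))) powr ((q - 1) / ((q - 1) * real n + 1))
      * \<epsilon> powr (1 / ((q - 1) * real n + 1)) = D/(D+1) * t"
    unfolding d_def[symmetric] r2 r1 r3 r4 r5 r6 t_def X_def by simp
  have K2e: "(1 + 2 powr (((q - 1) * real n + 1) / (q - 1))) * q powr (- (q / (q - 1))) \<ge> s"
  proof -
    have "(s+1) * (1 + 1/s) powr s \<le> 1 + 2 powr (1+s)" by (rule key_num[OF s0])
    also have "\<dots> \<le> 1 + 2 powr D" using d1 unfolding D_def by simp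
    finally have k: "(s+1) * (1 + 1/s) powr s \<le> 1 + 2 powr D" .
    have q1: "q = 1 + 1/s" using qq s0 by (simp add: field_simps)
    have qp: "q powr (s+1) = q * q powr s"
      using q powr_add[of q 1 s] by (simp add: add.commute)
    have sq: "s*q = s+1" using q1 s0 by (simp add: field_simps)
    have "s * q powr (s+1) = (s*q) * q powr s" unfolding qp by (simp add: mult.assoc)
    also have "\<dots> = (s+1) * q powr s" unfolding sq ..
    also have "\<dots> = (s+1) * (1 + 1/s) powr s" by (simp only: q1)
    finally have "s * q powr (s+1) = (s+1) * (1 + 1/s) powr s" .
    then have "s * q powr (s+1) \<le> 1 + 2 powr D" using k by simp
    then have "s \<le> (1 + 2 powr D) / q powr (s+1)" using q by (simp add: field_simps)
    also have "\<dots> = (1 + 2 powr D) * q powr (- (s+1))"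
    proof -
      have "q powr (-(s+1)) = inverse (q powr (s+1))" by (rule powr_minus)
      then show ?thesis by (simp only: divide_inverse)
    qed
    finally show ?thesis unfolding d_def[symmetric] r2 r4 .
  qed
  have Mqe: "Mq q (\<epsilon>/(q-1)) t * (2*t)^n \<le> t / (D+1)"
  proof -
    have aq: "\<epsilon>/(q-1) * q = \<epsilon> * (s+1)" using s0 unfolding qq by (simp add: field_simps)
    have mq: "-1/q = - (s/(s+1))" using s0 unfolding qq by (simp add: field_simps)
    have es0: "\<epsilon> * (s+1) > 0" using e s0 by simp
    have "Mq q (\<epsilon>/(q-1)) t = (t * (\<epsilon> * (s+1)) powr (- (s/(s+1)))) powr (s+1) / (s+1)"
      unfolding Mq_def aq mq r4 ..
    also have "\<dots> = t powr (s+1) * (\<epsilon> * (s+1)) powr (- s) / (s+1)"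
      using t0 es0 s0 by (simp add: powr_mult powr_powr)
    finally have M1: "Mq q (\<epsilon>/(q-1)) t = t powr (s+1) * (\<epsilon> * (s+1)) powr (- s) / (s+1)" .
    have tn: "(2*t)^n = 2 powr d * t powr d"
      using t0 by (simp add: d_def powr_realpow[symmetric] powr_mult)
    have tD: "t powr D = X * \<epsilon> powr s"
      unfolding t_def using X0 e D0 by (simp add: powr_mult powr_powr)
    have tt: "t powr (s+1) * t powr d = t * t powr D"
    proof -
      have "t powr (s+1) * t powr d = t powr ((s+1) + d)" by (rule powr_add[symmetric])
      also have "(s+1) + d = 1 + D" unfolding D_def by simp
      also have "t powr (1 + D) = t powr 1 * t powr D" by (rule powr_add)
      also have "\<dots> = t * t powr D" using t0 by simp
      finally show ?thesis .
    qed
    have "Mq q (\<epsilon>/(q-1)) t * (2*t)^n = (t powr (s+1) * t powr d) * (\<epsilon> * (s+1)) powr (- s) * 2 powr d / (s+1)"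
      unfolding M1 tn by simp
    also have "\<dots> = t * X * \<epsilon> powr s * (\<epsilon> * (s+1)) powr (- s) * 2 powr d / (s+1)"
      unfolding tt tD by simp
    also have "\<dots> = t * X * (s+1) powr (- s) * 2 powr d / (s+1)"
    proof -
      have p1: "(\<epsilon> * (s+1)) powr (- s) = \<epsilon> powr (-s) * (s+1) powr (-s)"
        using e s0 by (intro powr_mult)
      have p2: "\<epsilon> powr s * \<epsilon> powr (-s) = 1"
      proof -
        have "\<epsilon> powr s * \<epsilon> powr (-s) = \<epsilon> powr (s + -s)" by (rule powr_add[symmetric])
        then show ?thesis using e by simp
      qed
      have "\<epsilon> powr s * (\<epsilon> * (s+1)) powr (- s) = (\<epsilon> powr s * \<epsilon> powr (-s)) * (s+1) powr (-s)"
        unfolding p1 by (simp only: mult.assoc)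
      then have "\<epsilon> powr s * (\<epsilon> * (s+1)) powr (- s) = (s+1) powr (-s)" unfolding p2 by simp
      then show ?thesis by (simp add: mult.assoc)
    qed
    also have "\<dots> = t / ((D+1) * 2 powr s)"
    proof -
      have a1: "(s+1) powr (s+1) * (s+1) powr (- s) / (s+1) = 1"
        using s0 by (simp add: powr_add[symmetric])
      have a2: "2 powr d / 2 powr D = 1 / 2 powr s"
        unfolding D_def by (simp add: powr_add field_simps)
      have "t * X * (s+1) powr (- s) * 2 powr d / (s+1)
          = t / (D+1) * ((s+1) powr (s+1) * (s+1) powr (- s) / (s+1)) * (2 powr d / 2 powr D)"
        unfolding X_def by (simp add: field_simps)
      also have "\<dots> = t / ((D+1) * 2 powr s)" unfolding a1 a2 by simp
      finally show ?thesis .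
    qed
    also have "\<dots> \<le> t / (D+1)"
    proof -
      have "2 powr s \<ge> 1" using s0 by (intro ge_one_powr_ge_zero) auto
      then show ?thesis using t0 D0 by (simp add: frac_le)
    qed
    finally show ?thesis .
  qed
  have a: "\<epsilon>/(q-1) = s * \<epsilon>" unfolding s_def by simp
  have "D/(D+1) * t - s * \<epsilon> \<le> t - Mq q (\<epsilon>/(q-1)) t * (2*t)^n - \<epsilon>/(q-1)"
  proof -
    have "D/(D+1) * t = t - t/(D+1)" using D0 by (simp add: field_simps)
    then show ?thesis using Mqe a by linarith
  qed
  moreover have "(1 + 2 powr (((q - 1) * real n + 1) / (q - 1))) * q powr (- (q / (q - 1))) * \<epsilon> \<ge> s * \<epsilon>"
    using K2e e by (simp add: mult_right_mono)
  ultimately show ?thesis using t0 K1e by (intro exI[of _ t]) linarith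
qed

lemma per_coupling:
  fixes \<pi> :: "((real^'n) \<times> (real^'n)) measure" and q \<epsilon> t :: real
  assumes cp: "\<pi> \<in> couplings unif_cube unif_cube" and q: "q > 1" and e: "\<epsilon> > 0" and t: "t > 0"
  shows "ereal (t - Mq q (\<epsilon>/(q-1)) t * (2*t)^CARD('n) - \<epsilon>/(q-1))
     \<le> enn2ereal (\<integral>\<^sup>+ z. ennreal (l1_cost z) \<partial>\<pi>) + ereal \<epsilon> * tsallis q \<pi> ((unif_cube :: (real^'n) measure) \<Otimes>\<^sub>M unif_cube)"
proof (cases "sets \<pi> = sets ((unif_cube :: (real^'n) measure) \<Otimes>\<^sub>M unif_cube) \<and> absolutely_continuous ((unif_cube :: (real^'n) measure) \<Otimes>\<^sub>M unif_cube) \<pi>")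
  case True
  let ?\<nu> = "(unif_cube :: (real^'n) measure) \<Otimes>\<^sub>M unif_cube"
  have a: "\<epsilon>/(q-1) > 0" using q e by simp
  have M0: "Mq q (\<epsilon>/(q-1)) t \<ge> 0" unfolding Mq_def using q by simp
  note c1 = core(1)[OF cp q a t conjunct1[OF True] conjunct2[OF True]]
  note c2 = core(2)[OF cp q a t conjunct1[OF True] conjunct2[OF True]]
  have ts: "tsallis q \<pi> ?\<nu> = ereal (1 / (q - 1)) *
          (enn2ereal (\<integral>\<^sup>+ x. ennreal (enn2real (RN_deriv ?\<nu> \<pi> x) powr q) \<partial>?\<nu>) - enn2ereal 1)"
    unfolding tsallis_def using True q c2 by simp
  show ?thesis unfolding ts
    by (rule ereal_step[OF c1 refl q e]) (use t M0 in auto)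
next
  case False
  then have ts: "tsallis q \<pi> ((unif_cube :: (real^'n) measure) \<Otimes>\<^sub>M unif_cube) = \<infinity>"
    unfolding tsallis_def by auto
  have "ereal \<epsilon> * \<infinity> = \<infinity>" using e by simp
  then show ?thesis unfolding ts by simp
qed

theorem theorem1p3:
  fixes q \<epsilon> :: real
  assumes "q > 1" and "\<epsilon> > 0"
  defines "d \<equiv> real CARD('n)"
  defines "K1 \<equiv> ((q - 1) * d + 1) / ((q - 1) * d + q) *
      ((q - 1) / (((q - 1) * d + q) * 2 powr (((q - 1) * d + 1) / (q - 1)))
        * (q / (q - 1)) powr (q / (q - 1))) powr ((q - 1) / ((q - 1) * d + 1))"
  defines "K2 \<equiv> (1 + 2 powr (((q - 1) * d + 1) / (q - 1))) * q powr (- (q / (q - 1)))"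
  shows "OT_reg q \<epsilon> l1_cost (unif_cube :: (real^'n) measure) (unif_cube :: (real^'n) measure)
           - OT l1_cost (unif_cube :: (real^'n) measure) (unif_cube :: (real^'n) measure)
         \<ge> ereal (K1 * \<epsilon> powr (1 / ((q - 1) * d + 1)) - K2 * \<epsilon>)"
proof -
  have n1: "CARD('n) \<ge> 1" using finite_UNIV_card_ge_0[where 'a='n] by simp
  obtain t where t: "t > 0" and tb: "K1 * \<epsilon> powr (1 / ((q - 1) * d + 1)) - K2 * \<epsilon>
      \<le> t - Mq q (\<epsilon>/(q-1)) t * (2*t)^CARD('n) - \<epsilon>/(q-1)"
    using final_num[OF assms(1,2) n1] unfolding K1_def K2_def d_def by (auto simp: mult.assoc)
  have "ereal (t - Mq q (\<epsilon>/(q-1)) t * (2*t)^CARD('n) - \<epsilon>/(q-1))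
      \<le> OT_reg q \<epsilon> l1_cost (unif_cube :: (real^'n) measure) (unif_cube :: (real^'n) measure)"
    unfolding OT_reg_def
    by (rule INF_greatest) (rule per_coupling[OF _ assms(1,2) t])
  then have "ereal (K1 * \<epsilon> powr (1 / ((q - 1) * d + 1)) - K2 * \<epsilon>)
      \<le> OT_reg q \<epsilon> l1_cost (unif_cube :: (real^'n) measure) (unif_cube :: (real^'n) measure)"
    using tb by (meson ereal_less_eq(3) order_trans)
  then show ?thesis unfolding OT_zero by simp
qed

end
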